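(* Let $A\to B$ be a map of $\mathbb{Z}$-graded unital rings, where $A$ is concentrated in grade $0$. Suppose $A\to B$ is separable, i.e. the multiplication map $\mu:B\otimes_A B^{op}\to B$, viewed as a map of $B$-bimodules, admits a $B$-bimodule section $\sigma:B\to B\otimes_A B^{op}$. Suppose moreover that $B$ has no zero divisors in the subring $B_0$ (no nonzero element of $B_0$ is a zero divisor in $B$). Then $B$ is concentrated in grade $0$.
   Context: Rings are unital and ring maps unital; gradings are $\mathbb{Z}$-gradings, $B_n$ denotes the degree-$n$ part of $B$. *)

theory Defs
  imports Main "HOL-Library.Poly_Mapping"
begin

definition Z_grading :: "(int \<Rightarrow> 'b::ring_1 set) \<Rightarrow> bool" where
  "Z_grading G \<longleftrightarrow>
     (\<forall>n. 0 \<in> G n \<and> (\<forall>x\<in>G n. \<forall>y\<in>G n. x - y \<in> G n)) \<and>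
     (\<forall>m n. \<forall>x\<in>G m. \<forall>y\<in>G n. x * y \<in> G (m + n)) \<and>
     (\<forall>b. \<exists>!c. finite {n. c n \<noteq> 0} \<and> (\<forall>n. c n \<in> G n) \<and>
                 b = (\<Sum>n\<in>{n. c n \<noteq> 0}. c n))"

definition ring_map :: "('a::ring_1 \<Rightarrow> 'b::ring_1) \<Rightarrow> bool" where
  "ring_map f \<longleftrightarrow> f 1 = 1 \<and> (\<forall>x y. f (x + y) = f x + f y) \<and> (\<forall>x y. f (x * y) = f x * f y)"

text \<open>Formal Z-linear combinations of pairs (x,y), x,y in B; the tensor product
  B \<otimes>_A B^op is the quotient by the subgroup tensor_rel f generated by the
  biadditivity and A-balancing relations (A acting through f).\<close>
type_synonym 'b formal_tensor = "('b \<times> 'b) \<Rightarrow>\<^sub>0 int"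

abbreviation pt :: "'b \<Rightarrow> 'b \<Rightarrow> 'b formal_tensor" where
  "pt x y \<equiv> Poly_Mapping.single (x, y) 1"

inductive_set tensor_rel :: "('a::ring_1 \<Rightarrow> 'b::ring_1) \<Rightarrow> 'b formal_tensor set"
  for f where
  zero: "0 \<in> tensor_rel f"
| addL: "pt (x + x') y - pt x y - pt x' y \<in> tensor_rel f"
| addR: "pt x (y + y') - pt x y - pt x y' \<in> tensor_rel f"
| bal: "pt (x * f a) y - pt x (f a * y) \<in> tensor_rel f"
| diff: "u \<in> tensor_rel f \<Longrightarrow> v \<in> tensor_rel f \<Longrightarrow> u - v \<in> tensor_rel f"

definition tensor_eq :: "('a::ring_1 \<Rightarrow> 'b::ring_1) \<Rightarrow> 'b formal_tensor \<Rightarrow> 'b formal_tensor \<Rightarrow> bool" where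
  "tensor_eq f u v \<longleftrightarrow> u - v \<in> tensor_rel f"

definition tmult :: "'b::ring_1 formal_tensor \<Rightarrow> 'b" where
  "tmult u = (\<Sum>p\<in>Poly_Mapping.keys u. of_int (Poly_Mapping.lookup u p) * (fst p * snd p))"

definition lact :: "'b::ring_1 \<Rightarrow> 'b formal_tensor \<Rightarrow> 'b formal_tensor" where
  "lact c u = (\<Sum>p\<in>Poly_Mapping.keys u. Poly_Mapping.single (c * fst p, snd p) (Poly_Mapping.lookup u p))"

definition ract :: "'b::ring_1 formal_tensor \<Rightarrow> 'b \<Rightarrow> 'b formal_tensor" where
  "ract u c = (\<Sum>p\<in>Poly_Mapping.keys u. Poly_Mapping.single (fst p, snd p * c) (Poly_Mapping.lookup u p))"

text \<open>f : A \<rightarrow> B is separable: mu : B \<otimes>_A B^op \<rightarrow> B admits a B-bimodule section sigma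
  (sigma given on representatives; all identities hold in the quotient).\<close>
definition separable_map :: "('a::ring_1 \<Rightarrow> 'b::ring_1) \<Rightarrow> bool" where
  "separable_map f \<longleftrightarrow> (\<exists>\<sigma> :: 'b \<Rightarrow> 'b formal_tensor.
     (\<forall>b b'. tensor_eq f (\<sigma> (b + b')) (\<sigma> b + \<sigma> b')) \<and>
     (\<forall>b c. tensor_eq f (\<sigma> (c * b)) (lact c (\<sigma> b))) \<and>
     (\<forall>b c. tensor_eq f (\<sigma> (b * c)) (ract (\<sigma> b) c)) \<and>
     (\<forall>b. tmult (\<sigma> b) = b))"

end

theory Submission
  imports Defs
begin

lemma G_zero: "Z_grading G \<Longrightarrow> 0 \<in> G n" unfolding Z_grading_def by blast
lemma G_diff: "Z_grading G \<Longrightarrow> x \<in> G n \<Longrightarrow> y \<in> G n \<Longrightarrow> x - y \<in> G n" unfolding Z_grading_def by blast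
lemma G_mult: "Z_grading G \<Longrightarrow> x \<in> G m \<Longrightarrow> y \<in> G n \<Longrightarrow> x * y \<in> G (m+n)" unfolding Z_grading_def by blast
lemma G_uminus: "Z_grading G \<Longrightarrow> x \<in> G n \<Longrightarrow> - x \<in> G n"
  using G_diff[of G 0 n x] G_zero[of G n] by simp
lemma G_add: "Z_grading G \<Longrightarrow> x \<in> G n \<Longrightarrow> y \<in> G n \<Longrightarrow> x + y \<in> G n"
  using G_diff[of G x n "-y"] G_uminus[of G y n] by simp
lemma G_sum: "Z_grading G \<Longrightarrow> (\<And>i. i \<in> I \<Longrightarrow> F i \<in> G n) \<Longrightarrow> sum F I \<in> G n"
  by (induction I rule: infinite_finite_induct) (auto intro: G_zero G_add)
lemma G_of_nat: "Z_grading G \<Longrightarrow> x \<in> G n \<Longrightarrow> of_nat k * x \<in> G n"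
  by (induction k) (auto simp: distrib_right intro: G_zero G_add)
lemma G_of_int: "Z_grading G \<Longrightarrow> x \<in> G n \<Longrightarrow> of_int k * x \<in> G n"
proof (cases "k \<ge> 0")
  case True
  assume a: "Z_grading G" "x \<in> G n"
  then show ?thesis using G_of_nat[OF a, of "nat k"] True by simp
next
  case False
  assume a: "Z_grading G" "x \<in> G n"
  then have "- (of_nat (nat (-k)) * x) \<in> G n" using G_of_nat[OF a] G_uminus[OF a(1)] by blast
  then show ?thesis using False by simp
qed

definition comp :: "(int \<Rightarrow> 'b::ring_1 set) \<Rightarrow> int \<Rightarrow> 'b \<Rightarrow> 'b" where
  "comp G n b = (THE c. finite {n. c n \<noteq> 0} \<and> (\<forall>n. c n \<in> G n) \<and> b = (\<Sum>n\<in>{n. c n \<noteq> 0}. c n)) n"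

lemma comp_props:
  assumes "Z_grading G"
  shows "finite {n. comp G n b \<noteq> 0} \<and> (\<forall>n. comp G n b \<in> G n) \<and> b = (\<Sum>n\<in>{n. comp G n b \<noteq> 0}. comp G n b)"
proof -
  from assms have "\<exists>!c. finite {n. c n \<noteq> 0} \<and> (\<forall>n. c n \<in> G n) \<and> b = (\<Sum>n\<in>{n. c n \<noteq> 0}. c n)"
    unfolding Z_grading_def by blast
  from theI'[OF this] show ?thesis unfolding comp_def[abs_def] by simp
qed

lemma comp_in: "Z_grading G \<Longrightarrow> comp G n b \<in> G n" using comp_props by blast
lemma comp_fin: "Z_grading G \<Longrightarrow> finite {n. comp G n b \<noteq> 0}" using comp_props by blast

lemma comp_sum_superset:
  assumes "Z_grading G" "finite S" "{n. comp G n b \<noteq> 0} \<subseteq> S"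
  shows "b = (\<Sum>n\<in>S. comp G n b)"
proof -
  have "b = (\<Sum>n\<in>{n. comp G n b \<noteq> 0}. comp G n b)" using comp_props[OF assms(1)] by blast
  also have "\<dots> = (\<Sum>n\<in>S. comp G n b)" using assms by (intro sum.mono_neutral_left) auto
  finally show ?thesis .
qed

lemma comp_unique:
  assumes "Z_grading G" "finite S" "\<And>n. c n \<in> G n" "\<And>n. n \<notin> S \<Longrightarrow> c n = 0" "b = (\<Sum>n\<in>S. c n)"
  shows "comp G n b = c n"
proof -
  have sub: "{n. c n \<noteq> 0} \<subseteq> S" using assms(4) by blast
  have fin: "finite {n. c n \<noteq> 0}" using finite_subset[OF sub assms(2)] .
  have bs: "b = (\<Sum>n\<in>{n. c n \<noteq> 0}. c n)" unfolding assms(5) using assms(2) sub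
    by (intro sum.mono_neutral_right) auto
  from assms(1) have ex: "\<exists>!c. finite {n. c n \<noteq> 0} \<and> (\<forall>n. c n \<in> G n) \<and> b = (\<Sum>n\<in>{n. c n \<noteq> 0}. c n)"
    unfolding Z_grading_def by blast
  have "(THE c. finite {n. c n \<noteq> 0} \<and> (\<forall>n. c n \<in> G n) \<and> b = (\<Sum>n\<in>{n. c n \<noteq> 0}. c n)) = c"
    using the1_equality[OF ex] fin assms(3) bs by blast
  then show ?thesis unfolding comp_def by simp
qed

lemma comp_homog:
  assumes "Z_grading G" "x \<in> G m"
  shows "comp G n x = (if n = m then x else 0)"
  by (rule comp_unique[OF assms(1), of "{m}"]) (use assms G_zero in auto)

lemma comp_add:
  assumes "Z_grading G"
  shows "comp G n (x + y) = comp G n x + comp G n y"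
proof (rule comp_unique[OF assms, of "{n. comp G n x \<noteq> 0} \<union> {n. comp G n y \<noteq> 0}"])
  show "finite ({n. comp G n x \<noteq> 0} \<union> {n. comp G n y \<noteq> 0})" using comp_fin[OF assms] by auto
  show "\<And>n. comp G n x + comp G n y \<in> G n" using comp_in[OF assms] G_add[OF assms] by blast
  show "\<And>n. n \<notin> {n. comp G n x \<noteq> 0} \<union> {n. comp G n y \<noteq> 0} \<Longrightarrow> comp G n x + comp G n y = 0" by auto
  show "x + y = (\<Sum>n\<in>{n. comp G n x \<noteq> 0} \<union> {n. comp G n y \<noteq> 0}. comp G n x + comp G n y)"
    unfolding sum.distrib using comp_sum_superset[OF assms] comp_fin[OF assms] by (metis finite_Un sup_ge1 sup_ge2)
qed

lemma comp_zero: "Z_grading G \<Longrightarrow> comp G n 0 = 0"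
  using comp_homog[of G 0 0 n] G_zero[of G 0] by simp

lemma comp_sum:
  assumes "Z_grading G"
  shows "comp G n (sum F I) = (\<Sum>i\<in>I. comp G n (F i))"
  by (induction I rule: infinite_finite_induct) (auto simp: comp_add[OF assms] comp_zero[OF assms])

lemma comp_mult_right0:
  assumes "Z_grading G" "a \<in> G 0"
  shows "comp G n (x * a) = comp G n x * a"
proof (rule comp_unique[OF assms(1), of "{n. comp G n x \<noteq> 0}"])
  show "finite {n. comp G n x \<noteq> 0}" using comp_fin[OF assms(1)] .
  show "\<And>n. comp G n x * a \<in> G n" using G_mult[OF assms(1) comp_in[OF assms(1)] assms(2)] by simp
  show "\<And>n. n \<notin> {n. comp G n x \<noteq> 0} \<Longrightarrow> comp G n x * a = 0" by auto
  show "x * a = (\<Sum>n\<in>{n. comp G n x \<noteq> 0}. comp G n x * a)"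
    unfolding sum_distrib_right[symmetric] using comp_props[OF assms(1)] by metis
qed

lemma comp_left:
  assumes "Z_grading G" "c \<in> G m"
  shows "comp G j (c * x) = c * comp G (j - m) x"
proof (rule comp_unique[OF assms(1), of "(\<lambda>n. n + m) ` {n. comp G n x \<noteq> 0}"])
  show "finite ((\<lambda>n. n + m) ` {n. comp G n x \<noteq> 0})" using comp_fin[OF assms(1)] by blast
  show "\<And>n. c * comp G (n - m) x \<in> G n" using G_mult[OF assms(1) assms(2) comp_in[OF assms(1)]]
    by (metis add.commute diff_add_cancel)
  show "\<And>n. n \<notin> (\<lambda>n. n + m) ` {n. comp G n x \<noteq> 0} \<Longrightarrow> c * comp G (n - m) x = 0"
    by (metis (mono_tags, lifting) diff_add_cancel image_eqI mem_Collect_eq mult_zero_right)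
  have "(\<Sum>n\<in>(\<lambda>n. n + m) ` {n. comp G n x \<noteq> 0}. c * comp G (n - m) x)
      = (\<Sum>n\<in>{n. comp G n x \<noteq> 0}. c * comp G n x)"
    by (subst sum.reindex) (auto simp: inj_on_def)
  also have "\<dots> = c * x" unfolding sum_distrib_left[symmetric] using comp_props[OF assms(1)] by metis
  finally show "c * x = (\<Sum>n\<in>(\<lambda>n. n + m) ` {n. comp G n x \<noteq> 0}. c * comp G (n - m) x)" by simp
qed

lemma comp_right:
  assumes "Z_grading G" "c \<in> G m"
  shows "comp G j (x * c) = comp G (j - m) x * c"
proof (rule comp_unique[OF assms(1), of "(\<lambda>n. n + m) ` {n. comp G n x \<noteq> 0}"])
  show "finite ((\<lambda>n. n + m) ` {n. comp G n x \<noteq> 0})" using comp_fin[OF assms(1)] by blast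
  show "\<And>n. comp G (n - m) x * c \<in> G n" using G_mult[OF assms(1) comp_in[OF assms(1)] assms(2)]
    by (metis diff_add_cancel)
  show "\<And>n. n \<notin> (\<lambda>n. n + m) ` {n. comp G n x \<noteq> 0} \<Longrightarrow> comp G (n - m) x * c = 0"
    by (metis (mono_tags, lifting) diff_add_cancel image_eqI mem_Collect_eq mult_zero_left)
  have "(\<Sum>n\<in>(\<lambda>n. n + m) ` {n. comp G n x \<noteq> 0}. comp G (n - m) x * c)
      = (\<Sum>n\<in>{n. comp G n x \<noteq> 0}. comp G n x * c)"
    by (subst sum.reindex) (auto simp: inj_on_def)
  also have "\<dots> = x * c" unfolding sum_distrib_right[symmetric] using comp_props[OF assms(1)] by metis
  finally show "x * c = (\<Sum>n\<in>(\<lambda>n. n + m) ` {n. comp G n x \<noteq> 0}. comp G (n - m) x * c)" by simp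
qed

lemma comp0_mult:
  assumes "Z_grading G" "finite S" "{n. comp G n x \<noteq> 0} \<subseteq> S"
  shows "comp G 0 (x * y) = (\<Sum>j\<in>S. comp G j x * comp G (-j) y)"
proof -
  have "x * y = (\<Sum>j\<in>S. comp G j x * y)" using comp_sum_superset[OF assms] by (metis sum_distrib_right)
  then have "comp G 0 (x * y) = (\<Sum>j\<in>S. comp G 0 (comp G j x * y))" using comp_sum[OF assms(1)] by metis
  also have "\<dots> = (\<Sum>j\<in>S. comp G j x * comp G (-j) y)"
    using comp_left[OF assms(1) comp_in[OF assms(1)]] by simp
  finally show ?thesis .
qed

lemma comp_of_int:
  assumes "Z_grading G"
  shows "comp G n (of_int k * x) = of_int k * comp G n x"
proof (rule comp_unique[OF assms, of "{n. comp G n x \<noteq> 0}"])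
  show "finite {n. comp G n x \<noteq> 0}" using comp_fin[OF assms] .
  show "\<And>n. of_int k * comp G n x \<in> G n" using G_of_int[OF assms comp_in[OF assms]] .
  show "\<And>n. n \<notin> {n. comp G n x \<noteq> 0} \<Longrightarrow> of_int k * comp G n x = 0" by auto
  show "of_int k * x = (\<Sum>n\<in>{n. comp G n x \<noteq> 0}. of_int k * comp G n x)"
    unfolding sum_distrib_left[symmetric] using comp_props[OF assms] by metis
qed

definition L :: "('b \<times> 'b \<Rightarrow> 'b::ring_1) \<Rightarrow> 'b formal_tensor \<Rightarrow> 'b" where
  "L g u = (\<Sum>p\<in>Poly_Mapping.keys u. of_int (Poly_Mapping.lookup u p) * g p)"

lemma L_superset:
  assumes "finite S" "Poly_Mapping.keys u \<subseteq> S"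
  shows "L g u = (\<Sum>p\<in>S. of_int (Poly_Mapping.lookup u p) * g p)"
  unfolding L_def using assms by (intro sum.mono_neutral_left) (auto simp: in_keys_iff)

lemma L_add: "L g (u + v) = L g u + L g v"
proof -
  let ?S = "Poly_Mapping.keys u \<union> Poly_Mapping.keys v"
  have "L g (u + v) = (\<Sum>p\<in>?S. of_int (Poly_Mapping.lookup (u+v) p) * g p)"
    using keys_add[of u v] by (intro L_superset) auto
  also have "\<dots> = (\<Sum>p\<in>?S. of_int (Poly_Mapping.lookup u p) * g p) + (\<Sum>p\<in>?S. of_int (Poly_Mapping.lookup v p) * g p)"
    by (simp add: lookup_add distrib_right sum.distrib)
  also have "\<dots> = L g u + L g v" by (subst (1 2) L_superset[of ?S]) auto
  finally show ?thesis .
qed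

lemma L_zero: "L g 0 = 0" unfolding L_def by simp

lemma L_diff: "L g (u - v) = L g u - L g v"
  using L_add[of g "u - v" v] by (simp add: eq_diff_eq)

lemma L_single: "L g (Poly_Mapping.single q k) = of_int k * g q"
  unfolding L_def by simp

lemma L_sum: "L g (sum F I) = (\<Sum>i\<in>I. L g (F i))"
  by (induction I rule: infinite_finite_induct) (auto simp: L_zero L_add)

lemma tmult_L: "tmult u = L (\<lambda>p. fst p * snd p) u"
  unfolding tmult_def L_def ..

lemma L_lact: "L g (lact c u) = (\<Sum>p\<in>Poly_Mapping.keys u. of_int (Poly_Mapping.lookup u p) * g (c * fst p, snd p))"
  unfolding lact_def L_sum L_single ..

lemma L_ract: "L g (ract u c) = (\<Sum>p\<in>Poly_Mapping.keys u. of_int (Poly_Mapping.lookup u p) * g (fst p, snd p * c))"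
  unfolding ract_def L_sum L_single ..

lemma L_rel:
  assumes "u \<in> tensor_rel f"
    and "\<And>x x' y. g (x + x', y) = g (x, y) + g (x', y)"
    and "\<And>x y y'. g (x, y + y') = g (x, y) + g (x, y')"
    and "\<And>x y a. g (x * f a, y) = g (x, f a * y)"
  shows "L g u = 0"
  using assms(1) by induction (auto simp: L_zero L_diff L_single assms(2-4))

lemma L_eq:
  assumes "tensor_eq f u v"
    and "\<And>x x' y. g (x + x', y) = g (x, y) + g (x', y)"
    and "\<And>x y y'. g (x, y + y') = g (x, y) + g (x, y')"
    and "\<And>x y a. g (x * f a, y) = g (x, f a * y)"
  shows "L g u = L g v"
  using L_rel[of "u - v" f g] assms unfolding tensor_eq_def by (simp add: L_diff)


definition Psi :: "(int \<Rightarrow> 'b::ring_1 set) \<Rightarrow> int \<Rightarrow> int \<Rightarrow> 'b \<times> 'b \<Rightarrow> 'b" where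
  "Psi G j k p = comp G j (fst p) * comp G k (snd p)"

lemma Psi_eq:
  assumes "Z_grading G" "\<forall>a. f a \<in> G 0" "tensor_eq f u v"
  shows "L (Psi G j k) u = L (Psi G j k) v"
proof (rule L_eq[OF assms(3)])
  show "\<And>x x' y. Psi G j k (x + x', y) = Psi G j k (x, y) + Psi G j k (x', y)"
    by (simp add: Psi_def comp_add[OF assms(1)] distrib_right)
  show "\<And>x y y'. Psi G j k (x, y + y') = Psi G j k (x, y) + Psi G j k (x, y')"
    by (simp add: Psi_def comp_add[OF assms(1)] distrib_left)
  show "\<And>x y a. Psi G j k (x * f a, y) = Psi G j k (x, f a * y)"
    using assms(2) by (simp add: Psi_def comp_mult_right0[OF assms(1)] comp_left[OF assms(1), of _ 0] mult.assoc)
qed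

theorem theorem4p2:
  fixes f :: "'a::ring_1 \<Rightarrow> 'b::ring_1" and G :: "int \<Rightarrow> 'b set"
  assumes "ring_map f"
    and "Z_grading G"
    and "\<forall>a. f a \<in> G 0"
    and "separable_map f"
    and "\<forall>x\<in>G 0. x \<noteq> 0 \<longrightarrow> (\<forall>y. (x * y = 0 \<longrightarrow> y = 0) \<and> (y * x = 0 \<longrightarrow> y = 0))"
  shows "\<forall>n. n \<noteq> 0 \<longrightarrow> G n = {0}"
proof -
  note gr = assms(2)
  obtain \<sigma> :: "'b \<Rightarrow> 'b formal_tensor" where
    sl: "\<And>b c. tensor_eq f (\<sigma> (c * b)) (lact c (\<sigma> b))" and
    sr: "\<And>b c. tensor_eq f (\<sigma> (b * c)) (ract (\<sigma> b) c)" and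
    sm: "\<And>b. tmult (\<sigma> b) = b"
    using assms(4) unfolding separable_map_def by blast
  define e where "e = \<sigma> 1"
  define u where "u j = L (Psi G j (-j)) e" for j
  have one0: "1 \<in> G 0" using assms(1,3) unfolding ring_map_def by metis
  have rel: "b * u j = u (j + n) * b" if b: "b \<in> G n" for b n j
  proof -
    have "L (Psi G (j+n) (-j)) (lact b e) = L (Psi G (j+n) (-j)) (\<sigma> b)"
      using Psi_eq[OF gr assms(3) sl[where c=b and b=1]] unfolding e_def by simp
    also have "\<dots> = L (Psi G (j+n) (-j)) (ract e b)"
      using Psi_eq[OF gr assms(3) sr[where c=b and b=1]] unfolding e_def by simp
    finally have eq: "L (Psi G (j+n) (-j)) (lact b e) = L (Psi G (j+n) (-j)) (ract e b)" .
    have "L (Psi G (j+n) (-j)) (lact b e) = b * u j"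
      unfolding L_lact unfolding u_def L_def Psi_def sum_distrib_left
      by (intro sum.cong refl) (simp add: comp_left[OF gr b] mult_of_int_commute mult.assoc)
    moreover have "L (Psi G (j+n) (-j)) (ract e b) = u (j + n) * b"
      unfolding L_ract unfolding u_def L_def Psi_def sum_distrib_right
      by (intro sum.cong refl) (simp add: comp_right[OF gr b] mult.assoc algebra_simps)
    ultimately show ?thesis using eq by simp
  qed
  define J where "J = (\<Union>p\<in>Poly_Mapping.keys e. {j. comp G j (fst p) \<noteq> 0})"
  have finJ: "finite J" unfolding J_def using comp_fin[OF gr] by auto
  have u0: "u j = 0" if "j \<notin> J" for j
    unfolding u_def L_def Psi_def using that by (auto simp: J_def intro!: sum.neutral)
  have uG: "u j \<in> G 0" for j
    unfolding u_def L_def Psi_def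
    by (intro G_sum[OF gr] G_of_int[OF gr]) (use G_mult[OF gr comp_in[OF gr] comp_in[OF gr], of j _ "-j"] in simp)
  have sum1: "(\<Sum>j\<in>J. u j) = 1"
  proof -
    have "(\<Sum>j\<in>J. u j) = (\<Sum>p\<in>Poly_Mapping.keys e. \<Sum>j\<in>J. of_int (Poly_Mapping.lookup e p) * (comp G j (fst p) * comp G (-j) (snd p)))"
      unfolding u_def L_def Psi_def by (rule sum.swap)
    also have "\<dots> = (\<Sum>p\<in>Poly_Mapping.keys e. of_int (Poly_Mapping.lookup e p) * comp G 0 (fst p * snd p))"
    proof (intro sum.cong refl)
      fix p assume p: "p \<in> Poly_Mapping.keys e"
      have "{n. comp G n (fst p) \<noteq> 0} \<subseteq> J" using p unfolding J_def by blast
      then show "(\<Sum>j\<in>J. of_int (Poly_Mapping.lookup e p) * (comp G j (fst p) * comp G (-j) (snd p))) =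
          of_int (Poly_Mapping.lookup e p) * comp G 0 (fst p * snd p)"
        using comp0_mult[OF gr finJ] by (simp add: sum_distrib_left)
    qed
    also have "\<dots> = comp G 0 (tmult e)"
      unfolding tmult_def comp_sum[OF gr] comp_of_int[OF gr] ..
    also have "\<dots> = 1" using sm[of 1] comp_homog[OF gr one0] unfolding e_def by simp
    finally show ?thesis .
  qed
  show ?thesis
  proof (intro allI impI)
    fix n :: int assume n: "n \<noteq> 0"
    show "G n = {0}"
    proof (intro equalityI subsetI)
      fix b assume b: "b \<in> G n"
      show "b \<in> {0}"
      proof (cases "(1::'b) = 0")
        case True
        then have "b = 0" by (metis mult_1_right mult_zero_right)
        then show ?thesis by simp
      next
        case False
        define K where "K = {j. u j \<noteq> 0}"
        have KJ: "K \<subseteq> J" using u0 K_def by blast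
        have finK: "finite K" using finite_subset[OF KJ finJ] .
        have "K \<noteq> {}"
        proof
          assume "K = {}"
          then have "(\<Sum>j\<in>J. u j) = 0" unfolding K_def by simp
          then show False using sum1 False by simp
        qed
        have "\<exists>j. u j \<noteq> 0 \<and> u (j + n) = 0"
        proof (cases "n > 0")
          case True
          have "Max K \<in> K" using Max_in[OF finK \<open>K \<noteq> {}\<close>] .
          moreover have "Max K + n \<notin> K" using Max_ge[OF finK, of "Max K + n"] True by auto
          ultimately show ?thesis unfolding K_def by blast
        next
          case False
          then have nn: "n < 0" using n by simp
          have "Min K \<in> K" using Min_in[OF finK \<open>K \<noteq> {}\<close>] .
          moreover have "Min K + n \<notin> K" using Min_le[OF finK, of "Min K + n"] nn by auto
          ultimately show ?thesis unfolding K_def by blast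
        qed
        then obtain j where j: "u j \<noteq> 0" "u (j + n) = 0" by blast
        have "b * u j = 0" using rel[OF b, of j] j(2) by simp
        then have "b = 0" using assms(5) uG[of j] j(1) by blast
        then show ?thesis by simp
      qed
    next
      fix b assume "b \<in> {0::'b}"
      then show "b \<in> G n" using G_zero[OF gr] by simp
    qed
  qed
qed

end
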